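(* The edge set of the complete graph $K_{16}$ can be partitioned into five subgraphs each isomorphic to $P_4 \square P_4$.
   Context: $P_n$ denotes the path graph on $n$ vertices and $K_m$ the complete graph on $m$ vertices. For graphs $G=(V,E)$ and $G'=(V',E')$, the Cartesian product $G \square G'$ has vertex set $V\times V'$, with $\{(v,v'),(w,w')\}$ an edge iff either $\{v,w\}\in E$ and $v'=w'$, or $v=w$ and $\{v',w'\}\in E'$. Thus $P_4\square P_4$ is the $4\times 4$ grid graph with 16 vertices and 24 edges. *)

theory Defs
  imports Main
begin

type_synonym 'a sgraph = "'a set \<times> 'a set set"

definition verts :: "'a sgraph \<Rightarrow> 'a set" where "verts G = fst G"
definition edges :: "'a sgraph \<Rightarrow> 'a set set" where "edges G = snd G"

definition path_graph :: "nat \<Rightarrow> nat sgraph" where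
  "path_graph n = ({0..<n}, {{i, i + 1} | i. i + 1 < n})"

definition complete_graph :: "nat \<Rightarrow> nat sgraph" where
  "complete_graph m = ({0..<m}, {{i, j} | i j. i < m \<and> j < m \<and> i \<noteq> j})"

definition cart_prod :: "'a sgraph \<Rightarrow> 'b sgraph \<Rightarrow> ('a \<times> 'b) sgraph" where
  "cart_prod G H = (verts G \<times> verts H,
     {{(v, v'), (w, w')} | v v' w w'.
        ({v, w} \<in> edges G \<and> v' = w' \<and> v' \<in> verts H) \<or>
        (v = w \<and> v \<in> verts G \<and> {v', w'} \<in> edges H)})"

definition graph_iso :: "'a sgraph \<Rightarrow> 'b sgraph \<Rightarrow> bool" where
  "graph_iso G H \<longleftrightarrow> (\<exists>f. bij_betw f (verts G) (verts H) \<and>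
     (\<forall>u\<in>verts G. \<forall>v\<in>verts G. {u, v} \<in> edges G \<longleftrightarrow> {f u, f v} \<in> edges H))"

definition edge_subgraph :: "'a set set \<Rightarrow> 'a sgraph" where
  "edge_subgraph F = (\<Union>F, F)"

end

theory Submission
  imports Defs
begin

definition T :: "(nat \<times> nat) list" where
  "T = [(1,1), (1,0), (3,0), (0,1), (1,3), (1,2), (3,1), (3,3), (3,2), (2,0), (0,0), (2,1), (0,3), (0,2), (2,2)]"

definition h :: "nat \<Rightarrow> nat \<Rightarrow> nat \<times> nat" where
  "h k n = (if n = 15 then (2,3) else T ! (5 * (n div 5) + (n mod 5 + 5 - k) mod 5))"

definition gadj :: "nat \<times> nat \<Rightarrow> nat \<times> nat \<Rightarrow> bool" where
  "gadj p q = ((fst p = fst q \<and> fst p < 4 \<and> snd p < 4 \<and> snd q < 4 \<and> (snd p = snd q + 1 \<or> snd q = snd p + 1)) \<or>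
               (snd p = snd q \<and> snd p < 4 \<and> fst p < 4 \<and> fst q < 4 \<and> (fst p = fst q + 1 \<or> fst q = fst p + 1)))"

lemma all_less_list: "(\<forall>u<n. P u) = list_all P [0..<n]"
  by (auto simp: list_all_iff)

lemma check1: "list_all (\<lambda>k. distinct (map (h k) [0..<16]) \<and> list_all (\<lambda>p. fst p < 4 \<and> snd p < 4) (map (h k) [0..<16])) [0..<5]"
  by code_simp

lemma check2: "list_all (\<lambda>k. list_all (\<lambda>l. k = l \<or> list_all (\<lambda>u. list_all (\<lambda>v. \<not> (gadj (h k u) (h k v) \<and> gadj (h l u) (h l v))) [0..<16]) [0..<16]) [0..<5]) [0..<5]"
  by code_simp

lemma check3: "list_all (\<lambda>u. list_all (\<lambda>v. u = v \<or> list_ex (\<lambda>k. gadj (h k u) (h k v)) [0..<5]) [0..<16]) [0..<16]"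
  by code_simp

definition F :: "nat \<Rightarrow> nat set set" where
  "F k = {{u, v} | u v. u < 16 \<and> v < 16 \<and> gadj (h k u) (h k v)}"

lemma gadj_sym: "gadj p q = gadj q p"
  unfolding gadj_def by auto

lemma gadj_irrefl: "\<not> gadj p p"
  unfolding gadj_def by auto

lemma doubleton_mem:
  assumes "\<And>a b. R a b \<Longrightarrow> R b a" "\<And>a. \<not> R a a"
  shows "({p, q} \<in> {{a, b} | a b. R a b}) = R p q"
  using assms by (auto simp: doubleton_eq_iff)

lemma grid_verts: "verts (cart_prod (path_graph 4) (path_graph 4)) = {0..<4} \<times> {0..<4}"
  by (simp add: cart_prod_def verts_def path_graph_def)

lemma path_edge: "({v, w} \<in> edges (path_graph n)) = ((w = v + 1 \<or> v = w + 1) \<and> v < n \<and> w < n)"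
  unfolding path_graph_def edges_def by (auto simp: doubleton_eq_iff)

lemma grid_edges: "edges (cart_prod (path_graph 4) (path_graph 4)) = {{p, q} | p q. gadj p q}"
proof -
  have "edges (cart_prod (path_graph 4) (path_graph 4)) =
     {{(v, v'), (w, w')} | v v' w w'.
        ({v, w} \<in> edges (path_graph 4) \<and> v' = w' \<and> v' \<in> {0..<4}) \<or>
        (v = w \<and> v \<in> {0..<4} \<and> {v', w'} \<in> edges (path_graph 4))}"
    by (simp add: cart_prod_def edges_def verts_def path_graph_def)
  also have "\<dots> = {{p, q} | p q. gadj p q}"
  proof (intro equalityI subsetI)
    fix e assume "e \<in> {{(v, v'), (w, w')} | v v' w w'.
        ({v, w} \<in> edges (path_graph 4) \<and> v' = w' \<and> v' \<in> {0..<4}) \<or>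
        (v = w \<and> v \<in> {0..<4} \<and> {v', w'} \<in> edges (path_graph 4))}"
    then obtain v v' w w' where e: "e = {(v, v'), (w, w')}" and
      c: "({v, w} \<in> edges (path_graph 4) \<and> v' = w' \<and> v' \<in> {0..<4}) \<or>
        (v = w \<and> v \<in> {0..<4} \<and> {v', w'} \<in> edges (path_graph 4))" by blast
    have "gadj (v, v') (w, w')" using c unfolding path_edge gadj_def by auto
    then show "e \<in> {{p, q} | p q. gadj p q}" using e by blast
  next
    fix e assume "e \<in> {{p, q} | p q. gadj p q}"
    then obtain v v' w w' where e: "e = {(v, v'), (w, w')}" and g: "gadj (v, v') (w, w')" by auto
    have "({v, w} \<in> edges (path_graph 4) \<and> v' = w' \<and> v' \<in> {0..<4}) \<or>
        (v = w \<and> v \<in> {0..<4} \<and> {v', w'} \<in> edges (path_graph 4))"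
      using g unfolding path_edge gadj_def by auto
    then show "e \<in> {{(v, v'), (w, w')} | v v' w w'.
        ({v, w} \<in> edges (path_graph 4) \<and> v' = w' \<and> v' \<in> {0..<4}) \<or>
        (v = w \<and> v \<in> {0..<4} \<and> {v', w'} \<in> edges (path_graph 4))}" using e by blast
  qed
  finally show ?thesis .
qed

lemma F_mem: "({u, v} \<in> F k) = (u < 16 \<and> v < 16 \<and> gadj (h k u) (h k v))"
  unfolding F_def
  by (rule doubleton_mem) (auto simp: gadj_sym gadj_irrefl)

lemma F_sub: "e \<in> F k \<Longrightarrow> \<exists>u v. e = {u, v} \<and> u < 16 \<and> v < 16 \<and> gadj (h k u) (h k v)"
  unfolding F_def by blast

lemma c1: "k < 5 \<Longrightarrow> distinct (map (h k) [0..<16]) \<and> (\<forall>p\<in>set (map (h k) [0..<16]). fst p < 4 \<and> snd p < 4)"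
  using check1 by (auto simp: list_all_iff)

lemma bij_h:
  assumes "k < 5"
  shows "bij_betw (h k) {0..<16} ({0..<4} \<times> {0..<4})"
proof -
  from c1[OF assms] have d: "inj_on (h k) {0..<16}" and s: "h k ` {0..<16} \<subseteq> {0..<4} \<times> {0..<4}"
    by (auto simp: distinct_map) (metis atLeastLessThan_iff fst_conv snd_conv zero_le)+
  have "card (h k ` {0..<16}) = 16" using d by (simp add: card_image)
  moreover have "card ({0..<4::nat} \<times> {0..<4::nat}) = 16" by (simp add: card_cartesian_product)
  ultimately have "h k ` {0..<16} = {0..<4} \<times> {0..<4}"
    using s by (intro card_subset_eq) auto
  with d show ?thesis by (simp add: bij_betw_def)
qed

lemma grid_nb: "p \<in> {0..<4} \<times> {0..<4} \<Longrightarrow> \<exists>q\<in>{0..<4} \<times> {0..<4}. gadj p q"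
proof -
  assume "p \<in> {0..<4} \<times> {0..<4}"
  then obtain a b where p: "p = (a, b)" "a < 4" "b < 4" by auto
  show ?thesis
  proof (cases "a = 0")
    case True
    then show ?thesis using p by (intro bexI[of _ "(1, b)"]) (auto simp: gadj_def)
  next
    case False
    then show ?thesis using p by (intro bexI[of _ "(a - 1, b)"]) (auto simp: gadj_def)
  qed
qed

lemma UF: assumes "k < 5" shows "\<Union>(F k) = {0..<16}"
proof
  show "\<Union>(F k) \<subseteq> {0..<16}"
  proof
    fix x assume "x \<in> \<Union>(F k)"
    then obtain e where "e \<in> F k" "x \<in> e" by blast
    then obtain u v where "e = {u, v}" "u < 16" "v < 16" using F_sub by blast
    then show "x \<in> {0..<16}" using \<open>x \<in> e\<close> by auto
  qed
next
  show "{0..<16} \<subseteq> \<Union>(F k)"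
  proof
    fix u :: nat assume u: "u \<in> {0..<16}"
    have b: "bij_betw (h k) {0..<16} ({0..<4} \<times> {0..<4})" using bij_h[OF assms] .
    have "h k u \<in> {0..<4} \<times> {0..<4}" using bij_betwE[OF b] u by blast
    then have "\<exists>q\<in>{0..<4} \<times> {0..<4}. gadj (h k u) q" by (rule grid_nb)
    then obtain q where q: "q \<in> {0..<4} \<times> {0..<4}" "gadj (h k u) q" by (elim bexE)
    have "q \<in> h k ` {0..<16}" using q(1) bij_betw_imp_surj_on[OF b] by simp
    then obtain v where v: "v \<in> {0..<16}" "h k v = q" by (elim imageE) simp
    have "gadj (h k u) (h k v)" using q v(2) by simp
    then have "{u, v} \<in> F k" unfolding F_mem using u v(1) by simp
    then show "u \<in> \<Union>(F k)" by blast
  qed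
qed

theorem theorem4:
  shows "\<exists>F :: nat \<Rightarrow> nat set set.
    (\<Union>k<5. F k) = edges (complete_graph 16) \<and>
    (\<forall>k<5. \<forall>l<5. k \<noteq> l \<longrightarrow> F k \<inter> F l = {}) \<and>
    (\<forall>k<5. graph_iso (edge_subgraph (F k))
                      (cart_prod (path_graph 4) (path_graph 4)))"
proof (intro exI[of _ F] conjI allI impI)
  have c3: "\<And>u v. u < 16 \<Longrightarrow> v < 16 \<Longrightarrow> u \<noteq> v \<Longrightarrow> \<exists>k<5. gadj (h k u) (h k v)"
    using check3 by (simp add: list_all_iff list_ex_iff) (metis atLeastLessThan_iff zero_le)
  show "(\<Union>k<5. F k) = edges (complete_graph 16)"
  proof
    show "(\<Union>k<5. F k) \<subseteq> edges (complete_graph 16)"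
    proof
      fix e assume "e \<in> (\<Union>k<5. F k)"
      then obtain k where "e \<in> F k" by blast
      then obtain u v where "e = {u, v}" "u < 16" "v < 16" "gadj (h k u) (h k v)" using F_sub by blast
      moreover have "u \<noteq> v" using calculation gadj_irrefl by metis
      ultimately show "e \<in> edges (complete_graph 16)"
        unfolding complete_graph_def edges_def by auto
    qed
  next
    show "edges (complete_graph 16) \<subseteq> (\<Union>k<5. F k)"
    proof
      fix e assume "e \<in> edges (complete_graph 16)"
      then obtain u v where e: "e = {u, v}" "u < 16" "v < 16" "u \<noteq> v"
        unfolding complete_graph_def edges_def by auto
      then obtain k where "k < 5" "gadj (h k u) (h k v)" using c3 by blast
      then show "e \<in> (\<Union>k<5. F k)" using e F_mem by blast
    qed
  qed
next
  fix k l :: nat assume kl: "k < 5" "l < 5" "k \<noteq> l"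
  have c2: "\<And>u v. u < 16 \<Longrightarrow> v < 16 \<Longrightarrow> \<not> (gadj (h k u) (h k v) \<and> gadj (h l u) (h l v))"
    using check2 kl by (simp add: list_all_iff) (meson atLeastLessThan_iff zero_le)
  show "F k \<inter> F l = {}"
  proof (rule ccontr)
    assume "F k \<inter> F l \<noteq> {}"
    then obtain e where "e \<in> F k" "e \<in> F l" by blast
    then obtain u v where "e = {u, v}" "u < 16" "v < 16" "gadj (h k u) (h k v)" using F_sub by blast
    moreover have "gadj (h l u) (h l v)" using calculation \<open>e \<in> F l\<close> F_mem by metis
    ultimately show False using c2 by blast
  qed
next
  fix k :: nat assume k: "k < 5"
  show "graph_iso (edge_subgraph (F k)) (cart_prod (path_graph 4) (path_graph 4))"
    unfolding graph_iso_def
  proof (intro exI[of _ "h k"] conjI ballI)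
    show "bij_betw (h k) (verts (edge_subgraph (F k))) (verts (cart_prod (path_graph 4) (path_graph 4)))"
      unfolding grid_verts using bij_h[OF k] UF[OF k] by (simp add: edge_subgraph_def verts_def)
  next
    fix u v assume "u \<in> verts (edge_subgraph (F k))" "v \<in> verts (edge_subgraph (F k))"
    then have uv: "u < 16" "v < 16" using UF[OF k] by (auto simp: edge_subgraph_def verts_def)
    show "({u, v} \<in> edges (edge_subgraph (F k))) = ({h k u, h k v} \<in> edges (cart_prod (path_graph 4) (path_graph 4)))"
    proof -
      have "({h k u, h k v} \<in> {{p, q} | p q. gadj p q}) = gadj (h k u) (h k v)"
        by (rule doubleton_mem) (metis gadj_sym, rule gadj_irrefl)
      moreover have "edges (edge_subgraph (F k)) = F k" by (simp add: edge_subgraph_def edges_def)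
      ultimately show ?thesis unfolding grid_edges using F_mem uv by simp
    qed
  qed
qed

end
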